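(* For every $r\geq 4$ there is an antipodal partial cube of rank $r$ and minimum degree $4$. Moreover, there is an antipodal partial cube of rank $4$ and minimum degree $3$.
   Context: Hypercube $Q_n$: vertex set $\{+,-\}^n$, adjacency = differing in one coordinate. A partial cube is an isometric subgraph $G$ of $Q_n$, with $n$ minimal (isometric dimension); its edges split into $\Theta$-classes $E_f$ (edges flipping coordinate $f$). $G$ is antipodal if for every vertex $v$ of $G$ the vertex of $Q_n$ with all coordinates of $v$ flipped also belongs to $G$. The contraction $\pi_f(G)$ is obtained by contracting all edges of $E_f$; the rank of $G$ is the largest $r$ such that $Q_r$ can be obtained from $G$ by a sequence of contractions. *)

theory Defs
  imports Main
begin

text \<open>Vertices of the hypercube Q_n are sign vectors in {+,-}^n, encoded as subsets
  of {0..<n} (the set of coordinates carrying +). A graph is a pair (V, E) of a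
  vertex set and an adjacency relation.\<close>

type_synonym graph = "nat set set \<times> (nat set \<Rightarrow> nat set \<Rightarrow> bool)"

definition hamming :: "nat set \<Rightarrow> nat set \<Rightarrow> nat" where
  "hamming u v = card ((u - v) \<union> (v - u))"

definition qadj :: "nat set \<Rightarrow> nat set \<Rightarrow> bool" where
  "qadj u v \<longleftrightarrow> hamming u v = 1"

definition qedge :: "nat set set \<Rightarrow> nat set \<Rightarrow> nat set \<Rightarrow> bool" where
  "qedge V u v \<longleftrightarrow> u \<in> V \<and> v \<in> V \<and> qadj u v"

definition is_walk :: "('a \<Rightarrow> 'a \<Rightarrow> bool) \<Rightarrow> 'a list \<Rightarrow> bool" where
  "is_walk E xs \<longleftrightarrow> xs \<noteq> [] \<and> (\<forall>i. Suc i < length xs \<longrightarrow> E (xs ! i) (xs ! Suc i))"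

definition has_dist :: "('a \<Rightarrow> 'a \<Rightarrow> bool) \<Rightarrow> 'a \<Rightarrow> 'a \<Rightarrow> nat \<Rightarrow> bool" where
  "has_dist E u v k \<longleftrightarrow>
     (\<exists>xs. is_walk E xs \<and> hd xs = u \<and> last xs = v \<and> length xs = Suc k) \<and>
     (\<forall>xs. is_walk E xs \<and> hd xs = u \<and> last xs = v \<longrightarrow> Suc k \<le> length xs)"

definition isometric_in_cube :: "nat \<Rightarrow> nat set set \<Rightarrow> bool" where
  "isometric_in_cube n V \<longleftrightarrow> V \<subseteq> Pow {0..<n} \<and>
     (\<forall>u\<in>V. \<forall>v\<in>V. has_dist (qedge V) u v (hamming u v))"

definition partial_cube :: "nat \<Rightarrow> nat set set \<Rightarrow> bool" where
  "partial_cube n V \<longleftrightarrow> V \<noteq> {} \<and> isometric_in_cube n V \<and>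
     \<not> (\<exists>m<n. \<exists>\<phi>. \<phi> ` V \<subseteq> Pow {0..<m} \<and>
            (\<forall>u\<in>V. \<forall>v\<in>V. has_dist (qedge V) u v (hamming (\<phi> u) (\<phi> v))))"

definition antipodal :: "nat \<Rightarrow> nat set set \<Rightarrow> bool" where
  "antipodal n V \<longleftrightarrow> (\<forall>v\<in>V. {0..<n} - v \<in> V)"

text \<open>Contraction of the Theta-class E_f (edges flipping coordinate f): the vertices
  joined by an edge of E_f are identified; a merged class is labelled by the sign
  vector with coordinate f removed (set to -).\<close>
definition contract :: "nat \<Rightarrow> graph \<Rightarrow> graph" where
  "contract f G = ((\<lambda>v. v - {f}) ` fst G,
     (\<lambda>x y. x \<noteq> y \<and> (\<exists>u\<in>fst G. \<exists>v\<in>fst G. snd G u v \<and> u - {f} = x \<and> v - {f} = y)))"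

definition contract_seq :: "nat list \<Rightarrow> graph \<Rightarrow> graph" where
  "contract_seq fs G = fold contract fs G"

definition iso_to_cube :: "graph \<Rightarrow> nat \<Rightarrow> bool" where
  "iso_to_cube G r \<longleftrightarrow> (\<exists>\<phi>. bij_betw \<phi> (fst G) (Pow {0..<r}) \<and>
     (\<forall>x\<in>fst G. \<forall>y\<in>fst G. snd G x y \<longleftrightarrow> qadj (\<phi> x) (\<phi> y)))"

definition pc_graph :: "nat set set \<Rightarrow> graph" where
  "pc_graph V = (V, qedge V)"

definition pc_rank :: "nat \<Rightarrow> nat set set \<Rightarrow> nat" where
  "pc_rank n V = (GREATEST r. \<exists>fs. set fs \<subseteq> {0..<n} \<and> iso_to_cube (contract_seq fs (pc_graph V)) r)"

definition min_degree :: "graph \<Rightarrow> nat" where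
  "min_degree G = Min ((\<lambda>v. card {u\<in>fst G. snd G v u}) ` fst G)"

end

theory Submission
  imports Defs
begin

definition flip :: "nat set \<Rightarrow> nat \<Rightarrow> nat set" where
  "flip u i = (if i \<in> u then u - {i} else insert i u)"

lemma sd_flip: "(u - flip u i) \<union> (flip u i - u) = {i}"
  by (auto simp: flip_def)

lemma hamming_flip: "hamming u (flip u i) = 1"
  unfolding hamming_def sd_flip by simp

lemma sd_flip2: "i \<in> (u - v) \<union> (v - u) \<Longrightarrow>
   (flip u i - v) \<union> (v - flip u i) = ((u - v) \<union> (v - u)) - {i}"
  by (auto simp: flip_def)

lemma hamming_flip2:
  assumes "finite u" "finite v" "i \<in> (u - v) \<union> (v - u)"
  shows "hamming (flip u i) v + 1 = hamming u v"
proof -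
  have "card ((u - v) \<union> (v - u)) > 0" using assms by (auto simp: card_gt_0_iff)
  then show ?thesis unfolding hamming_def using assms
    by (simp add: sd_flip2 card_Diff_singleton)
qed

lemma hamming_triangle:
  assumes "finite a" "finite b" "finite c"
  shows "hamming a c \<le> hamming a b + hamming b c"
proof -
  have "(a - c) \<union> (c - a) \<subseteq> ((a - b) \<union> (b - a)) \<union> ((b - c) \<union> (c - b))" by auto
  then have "card ((a - c) \<union> (c - a)) \<le> card (((a - b) \<union> (b - a)) \<union> ((b - c) \<union> (c - b)))"
    using assms by (intro card_mono) auto
  also have "\<dots> \<le> card ((a - b) \<union> (b - a)) + card ((b - c) \<union> (c - b))" by (rule card_Un_le)
  finally show ?thesis unfolding hamming_def .
qed

lemma hamming_zero: "finite a \<Longrightarrow> finite b \<Longrightarrow> hamming a b = 0 \<Longrightarrow> a = b"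
  unfolding hamming_def by auto

lemma is_walk_Cons2: "is_walk E (x # y # xs) \<longleftrightarrow> E x y \<and> is_walk E (y # xs)"
  unfolding is_walk_def
  apply (auto simp: nth_Cons split: nat.splits)
  done

lemma walk_lower:
  assumes fin: "\<forall>x\<in>V. finite x"
  shows "is_walk (qedge V) xs \<Longrightarrow> hd xs \<in> V \<Longrightarrow>
     last xs \<in> V \<and> hamming (hd xs) (last xs) + 1 \<le> length xs"
proof (induction xs)
  case Nil then show ?case by (simp add: is_walk_def)
next
  case (Cons x xs)
  note IH = Cons.IH and prems = Cons.prems
  show ?case
  proof (cases xs)
    case Nil
    then show ?thesis using prems by (simp add: hamming_def)
  next
    case (Cons y ys)
    have e: "qedge V x y" and w: "is_walk (qedge V) (y # ys)"
      using prems(1) unfolding Cons is_walk_Cons2 by auto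
    hence yV: "y \<in> V" "x \<in> V" and hxy: "hamming x y = 1" by (auto simp: qedge_def qadj_def)
    have IH': "last (y#ys) \<in> V \<and> hamming y (last (y#ys)) + 1 \<le> length (y#ys)"
      using IH w yV Cons by simp
    have "hamming x (last (y#ys)) \<le> hamming x y + hamming y (last (y#ys))"
      by (rule hamming_triangle) (use fin yV IH' in auto)
    then show ?thesis using IH' hxy Cons by simp
  qed
qed

lemma walk_exists:
  assumes fin: "\<forall>x\<in>V. finite x"
    and step: "\<And>u v. u \<in> V \<Longrightarrow> v \<in> V \<Longrightarrow> u \<noteq> v \<Longrightarrow> \<exists>i. i \<in> (u - v) \<union> (v - u) \<and> flip u i \<in> V"
  shows "u \<in> V \<Longrightarrow> v \<in> V \<Longrightarrow> hamming u v = d \<Longrightarrow>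
    \<exists>xs. is_walk (qedge V) xs \<and> hd xs = u \<and> last xs = v \<and> length xs = Suc d"
proof (induction d arbitrary: u)
  case 0
  then have "u = v" using hamming_zero fin by blast
  then show ?case by (intro exI[of _ "[u]"]) (simp add: is_walk_def)
next
  case (Suc d)
  then have "u \<noteq> v" by (auto simp: hamming_def)
  then obtain i where i: "i \<in> (u - v) \<union> (v - u)" "flip u i \<in> V" using step Suc.prems by blast
  have "hamming (flip u i) v + 1 = hamming u v" using hamming_flip2 i fin Suc.prems by blast
  then have "hamming (flip u i) v = d" using Suc.prems by simp
  then obtain xs where xs: "is_walk (qedge V) xs" "hd xs = flip u i" "last xs = v" "length xs = Suc d"
    using Suc.IH i Suc.prems by blast
  then obtain ys where ys: "xs = flip u i # ys" by (cases xs) auto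
  have "is_walk (qedge V) (u # xs)" using xs ys Suc.prems i hamming_flip
    by (simp add: is_walk_Cons2 qedge_def qadj_def)
  then show ?case using xs ys by (intro exI[of _ "u # xs"]) auto
qed

lemma has_dist_unique: "has_dist E u v k \<Longrightarrow> has_dist E u v k' \<Longrightarrow> k = k'"
  unfolding has_dist_def by (metis Suc_le_mono le_antisym)

lemma isometric_from_step:
  assumes sub: "V \<subseteq> Pow {0..<n}"
    and step: "\<And>u v. u \<in> V \<Longrightarrow> v \<in> V \<Longrightarrow> u \<noteq> v \<Longrightarrow> \<exists>i. i \<in> (u - v) \<union> (v - u) \<and> flip u i \<in> V"
  shows "isometric_in_cube n V"
proof -
  have fin: "\<forall>x\<in>V. finite x" using sub by (auto intro: finite_subset)
  { fix u v assume uv: "u \<in> V" "v \<in> V"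
    have ex: "\<exists>xs. is_walk (qedge V) xs \<and> hd xs = u \<and> last xs = v \<and> length xs = Suc (hamming u v)"
      using walk_exists[OF fin step uv] by blast
    have "\<forall>xs. is_walk (qedge V) xs \<and> hd xs = u \<and> last xs = v \<longrightarrow> Suc (hamming u v) \<le> length xs"
      using walk_lower[OF fin] uv by fastforce
    with ex have "has_dist (qedge V) u v (hamming u v)" unfolding has_dist_def by blast }
  then show ?thesis using sub unfolding isometric_in_cube_def by blast
qed


lemma ham1: "hamming x y = 1 \<longleftrightarrow> (\<exists>j. (x - y) \<union> (y - x) = {j})"
  unfolding hamming_def by (simp add: card_1_singleton_iff)

lemma sd_iff: "(x - y) \<union> (y - x) = {j} \<longleftrightarrow> (\<forall>z. (z \<in> x \<longleftrightarrow> z \<in> y) \<longleftrightarrow> z \<noteq> j)"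
  by auto

lemma qadj_iff: "qadj x y \<longleftrightarrow> (\<exists>j. \<forall>z. (z \<in> x \<longleftrightarrow> z \<in> y) \<longleftrightarrow> z \<noteq> j)"
  unfolding qadj_def ham1 sd_iff ..

lemma edge_gen: 
  fixes V :: "nat set set"
  assumes mA': "m \<in> A'" "Suc m \<in> A'" and fN: "f \<notin> N'"
  and memA: "\<And>x. x \<subseteq> N' \<Longrightarrow> x \<inter> A' \<noteq> {} \<Longrightarrow> x \<in> V"
  and memB: "\<And>x. x \<subseteq> N' \<Longrightarrow> \<not> A' \<subseteq> x \<Longrightarrow> insert f x \<in> V"
  and x: "x \<subseteq> N'" and y: "y \<subseteq> N'"
  shows "(x \<noteq> y \<and> (\<exists>u\<in>V. \<exists>v\<in>V. qedge V u v \<and> u - {f} = x \<and> v - {f} = y))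
      \<longleftrightarrow> qadj x y"
  proof
    assume "x \<noteq> y \<and> (\<exists>u\<in>V. \<exists>v\<in>V. qedge V u v \<and> u - {f} = x \<and> v - {f} = y)"
    then obtain u v where uv: "x \<noteq> y" "qadj u v" "u - {f} = x" "v - {f} = y"
      unfolding qedge_def by blast
    then obtain j where j: "\<forall>z. (z \<in> u \<longleftrightarrow> z \<in> v) \<longleftrightarrow> z \<noteq> j" unfolding qadj_iff by blast
    have "j \<noteq> f"
    proof
      assume "j = f"
      then have "x = y" using j uv(3,4) by blast
      then show False using uv(1) by simp
    qed
    then have "\<forall>z. (z \<in> x \<longleftrightarrow> z \<in> y) \<longleftrightarrow> z \<noteq> j" using j uv(3,4) by blast
    then show "qadj x y" unfolding qadj_iff by blast
  next
    assume "qadj x y"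
    then obtain j where j: "\<forall>z. (z \<in> x \<longleftrightarrow> z \<in> y) \<longleftrightarrow> z \<noteq> j" unfolding qadj_iff by blast
    have xy: "x \<noteq> y" using j by blast
    show "x \<noteq> y \<and> (\<exists>u\<in>V. \<exists>v\<in>V. qedge V u v \<and> u - {f} = x \<and> v - {f} = y)"
    proof (cases "A' \<subseteq> x \<or> A' \<subseteq> y")
      case True
      have "x \<inter> A' \<noteq> {} \<and> y \<inter> A' \<noteq> {}"
      proof (cases "j = m")
        case True
        then have "Suc m \<in> x \<and> Suc m \<in> y" using j \<open>A' \<subseteq> x \<or> A' \<subseteq> y\<close> mA' by auto
        then show ?thesis using mA' by blast
      next
        case False
        then have "m \<in> x \<and> m \<in> y" using j \<open>A' \<subseteq> x \<or> A' \<subseteq> y\<close> mA' by blast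
        then show ?thesis using mA' by blast
      qed
      then have "x \<in> V" "y \<in> V" using memA x y by auto
      moreover have "x - {f} = x" "y - {f} = y" using x y fN by auto
      ultimately show ?thesis using xy \<open>qadj x y\<close> unfolding qedge_def by metis
    next
      case False
      then have "insert f x \<in> V" "insert f y \<in> V" using memB x y by auto
      moreover have "insert f x - {f} = x" "insert f y - {f} = y" using x y fN by auto
      moreover have "qadj (insert f x) (insert f y)"
      proof -
        have "f \<noteq> j" using j x y fN by blast
        then have "\<forall>z. (z \<in> insert f x \<longleftrightarrow> z \<in> insert f y) \<longleftrightarrow> z \<noteq> j" using j by auto
        then show ?thesis unfolding qadj_iff by blast
      qed
      ultimately show ?thesis using xy unfolding qedge_def by metis
    qed
  qed

definition VV :: "nat \<Rightarrow> nat \<Rightarrow> nat set set" where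
  "VV k m = {v. v \<subseteq> {0..<k+m} \<and> (v = {} \<or> v = {0..<k+m} \<or>
      (v \<inter> {m..<k+m} \<noteq> {} \<and> \<not> {m..<k+m} \<subseteq> v))}"

context
  fixes k m :: nat
  assumes k3: "3 \<le> k" and m1: "1 \<le> m"
begin

lemma A3: "m \<in> {m..<k+m}" "Suc m \<in> {m..<k+m}" "Suc (Suc m) \<in> {m..<k+m}"
  using k3 by auto

lemma notA2: "{m..<k+m} \<subseteq> {i, j} \<Longrightarrow> False"
proof -
  assume a: "{m..<k+m} \<subseteq> {i, j}"
  have "m \<in> {i,j}" "Suc m \<in> {i,j}" "Suc (Suc m) \<in> {i,j}" using A3 a by blast+
  then show False by auto
qed

lemma notA1: "{m..<k+m} \<subseteq> {i} \<Longrightarrow> False"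
  using notA2[of i i] by simp

lemma step:
  assumes u: "u \<in> VV k m" and v: "v \<in> VV k m" and uv: "u \<noteq> v"
  shows "\<exists>i. i \<in> (u - v) \<union> (v - u) \<and> flip u i \<in> VV k m"
proof -
  define N where "N = {0..<k+m}"
  define A where "A = {m..<k+m}"
  have AN: "A \<subseteq> N" unfolding A_def N_def by auto
  have Ane: "A \<noteq> {}" using A3 unfolding A_def by auto
  have nA1: "\<And>i. \<not> A \<subseteq> {i}" using notA1 unfolding A_def by blast
  have nA2: "\<And>i j. \<not> A \<subseteq> {i, j}" using notA2 unfolding A_def by blast
  have mem: "\<And>x. x \<in> VV k m \<longleftrightarrow> x \<subseteq> N \<and> (x = {} \<or> x = N \<or> (x \<inter> A \<noteq> {} \<and> \<not> A \<subseteq> x))"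
    unfolding VV_def N_def A_def by simp
  have uN: "u \<subseteq> N" and vN: "v \<subseteq> N" using u v mem by auto
  consider (e) "u = {}" | (f) "u = N" | (M) "u \<noteq> {}" "u \<noteq> N" "u \<inter> A \<noteq> {}" "\<not> A \<subseteq> u"
    using u mem by blast
  then show ?thesis
  proof cases
    case e
    have "v \<inter> A \<noteq> {}" using v uv e mem Ane AN by auto
    then obtain i where i: "i \<in> v" "i \<in> A" by blast
    have "flip u i = {i}" using e by (simp add: flip_def)
    moreover have "{i} \<in> VV k m" using i AN nA1 mem by auto
    ultimately show ?thesis using i e by auto
  next
    case f
    have "\<not> A \<subseteq> v" using v uv f mem Ane by auto
    then obtain i where i: "i \<notin> v" "i \<in> A" by blast
    have "flip u i = N - {i}" using f i AN by (auto simp: flip_def)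
    moreover have "N - {i} \<in> VV k m"
    proof -
      have "(N - {i}) \<inter> A \<noteq> {}" using nA1 AN by auto
      moreover have "N - {i} \<noteq> N" using i AN by auto
      ultimately show ?thesis using mem i by auto
    qed
    ultimately show ?thesis using i f AN by auto
  next
    case M
    show ?thesis
    proof (cases "\<exists>i. i \<in> (u - v) \<union> (v - u) \<and> i \<notin> A")
      case True
      then obtain i where i: "i \<in> (u - v) \<union> (v - u)" "i \<notin> A" by blast
      have iN: "i \<in> N" using i uN vN by auto
      have "flip u i \<inter> A = u \<inter> A" using i by (auto simp: flip_def)
      moreover have "flip u i \<subseteq> N" using iN uN by (auto simp: flip_def)
      moreover have "flip u i \<noteq> {}" using M \<open>flip u i \<inter> A = u \<inter> A\<close> by auto
      moreover have "\<not> A \<subseteq> flip u i" using M \<open>flip u i \<inter> A = u \<inter> A\<close> by auto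
      ultimately have "flip u i \<in> VV k m" using mem M by auto
      then show ?thesis using i by blast
    next
      case False
      then have DA: "(u - v) \<union> (v - u) \<subseteq> A" by blast
      consider (ve) "v = {}" | (vf) "v = N" | (vM) "v \<noteq> {}" "v \<noteq> N" "v \<inter> A \<noteq> {}" "\<not> A \<subseteq> v"
        using v mem by blast
      then show ?thesis
      proof cases
        case ve
        then obtain i where i: "i \<in> u" using M by auto
        have fl: "flip u i = u - {i}" using i by (simp add: flip_def)
        have "u - {i} \<in> VV k m"
        proof (cases "u - {i} = {}")
          case True then show ?thesis using mem by auto
        next
          case False
          have "u \<subseteq> A" using DA ve by auto
          then show ?thesis using False M mem uN by auto
        qed
        then show ?thesis using fl i ve by auto
      next
        case vf
        then obtain i where i: "i \<in> A" "i \<notin> u" using M by auto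
        have fl: "flip u i = insert i u" using i by (simp add: flip_def)
        have "insert i u \<in> VV k m"
        proof (cases "insert i u = N")
          case True then show ?thesis using mem by auto
        next
          case False
          have "N - u \<subseteq> A" using DA vf by auto
          then have "\<not> A \<subseteq> insert i u" using False uN AN i by auto
          then show ?thesis using False i uN AN mem by auto
        qed
        then show ?thesis using fl i vf AN by auto
      next
        case vM
        show ?thesis
        proof (cases "\<exists>i\<in>v - u. \<not> A \<subseteq> insert i u")
          case True
          then obtain i where i: "i \<in> v - u" "\<not> A \<subseteq> insert i u" by blast
          have "flip u i = insert i u" using i by (simp add: flip_def)
          moreover have "insert i u \<in> VV k m" using i M uN vN mem by auto
          ultimately show ?thesis using i by auto
        next
          case False1: False
          show ?thesis
          proof (cases "\<exists>i\<in>u - v. (u - {i}) \<inter> A \<noteq> {}")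
            case True
            then obtain i where i: "i \<in> u - v" "(u - {i}) \<inter> A \<noteq> {}" by blast
            have "flip u i = u - {i}" using i by (simp add: flip_def)
            moreover have "u - {i} \<in> VV k m" using i M uN mem by auto
            ultimately show ?thesis using i by auto
          next
            case False2: False
            show ?thesis
            proof (cases "v - u = {}")
              case True
              then obtain i where i: "i \<in> u - v" using uv by auto
              have "u \<inter> A \<subseteq> {i}" using False2 i by auto
              moreover have "v \<inter> A \<subseteq> u \<inter> A" using True by auto
              ultimately show ?thesis using vM i by auto
            next
              case False
              then obtain i where i: "i \<in> v - u" by auto
              have Ai: "A \<subseteq> insert i u" using False1 i by auto
              obtain j where j: "j \<in> A" "j \<notin> v" using vM by auto
              show ?thesis
              proof (cases "j \<in> u")
                case True
                have "u \<inter> A \<subseteq> {j}" using False2 True j by auto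
                then have "A \<subseteq> {i, j}" using Ai by auto
                then show ?thesis using nA2 by blast
              next
                case False
                then show ?thesis using Ai i j by auto
              qed
            qed
          qed
        qed
      qed
    qed
  qed
qed


lemma VV_sub: "VV k m \<subseteq> Pow {0..<k+m}"
  unfolding VV_def by auto

lemma VV_fin: "finite (VV k m)"
  using VV_sub finite_subset by blast

lemma VV_iso: "isometric_in_cube (k+m) (VV k m)"
  by (rule isometric_from_step[OF VV_sub step]) auto

lemma VV_empty: "{} \<in> VV k m" unfolding VV_def by auto

lemma VV_full: "{0..<k+m} \<in> VV k m" unfolding VV_def by auto

lemma VV_antipodal: "antipodal (k+m) (VV k m)"
  unfolding antipodal_def
proof
  fix v assume v: "v \<in> VV k m"
  define N where "N = {0..<k+m}"
  define A where "A = {m..<k+m}"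
  have AN: "A \<subseteq> N" unfolding A_def N_def by auto
  have mem: "\<And>x. x \<in> VV k m \<longleftrightarrow> x \<subseteq> N \<and> (x = {} \<or> x = N \<or> (x \<inter> A \<noteq> {} \<and> \<not> A \<subseteq> x))"
    unfolding VV_def N_def A_def by simp
  have vN: "v \<subseteq> N" using v mem by blast
  consider "v = {}" | "v = N" | "v \<inter> A \<noteq> {}" "\<not> A \<subseteq> v" using v mem by blast
  then have "N - v \<in> VV k m"
  proof cases
    case 1 then show ?thesis using mem by simp
  next
    case 2 then show ?thesis using mem by simp
  next
    case 3
    have "(N - v) \<inter> A \<noteq> {}" using 3 AN by blast
    moreover have "\<not> A \<subseteq> N - v" using 3 by blast
    ultimately show ?thesis using mem by blast
  qed
  then show "{0..<k + m} - v \<in> VV k m" unfolding N_def .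
qed

lemma VV_pc: "partial_cube (k+m) (VV k m)"
proof -
  have "\<not> (\<exists>m'<k+m. \<exists>\<phi>. \<phi> ` VV k m \<subseteq> Pow {0..<m'} \<and>
            (\<forall>u\<in>VV k m. \<forall>v\<in>VV k m. has_dist (qedge (VV k m)) u v (hamming (\<phi> u) (\<phi> v))))"
  proof
    assume "\<exists>m'<k+m. \<exists>\<phi>. \<phi> ` VV k m \<subseteq> Pow {0..<m'} \<and>
            (\<forall>u\<in>VV k m. \<forall>v\<in>VV k m. has_dist (qedge (VV k m)) u v (hamming (\<phi> u) (\<phi> v)))"
    then obtain m' \<phi> where m': "m' < k+m" "\<phi> ` VV k m \<subseteq> Pow {0..<m'}"
      and h: "\<forall>u\<in>VV k m. \<forall>v\<in>VV k m. has_dist (qedge (VV k m)) u v (hamming (\<phi> u) (\<phi> v))"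
      by blast
    have d1: "has_dist (qedge (VV k m)) {} {0..<k+m} (hamming (\<phi> {}) (\<phi> {0..<k+m}))"
      using h VV_empty VV_full by blast
    have d2: "has_dist (qedge (VV k m)) {} {0..<k+m} (hamming {} {0..<k+m})"
      using VV_iso VV_empty VV_full unfolding isometric_in_cube_def by blast
    have "hamming {} {0..<k+m} = k + m" by (simp add: hamming_def)
    moreover have "hamming (\<phi> {}) (\<phi> {0..<k+m}) \<le> m'"
    proof -
      have "\<phi> {} \<subseteq> {0..<m'}" "\<phi> {0..<k+m} \<subseteq> {0..<m'}" using m'(2) VV_empty VV_full by auto
      then have "(\<phi> {} - \<phi> {0..<k+m}) \<union> (\<phi> {0..<k+m} - \<phi> {}) \<subseteq> {0..<m'}" by auto
      then show ?thesis unfolding hamming_def using card_mono[of "{0..<m'}"] by fastforce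
    qed
    ultimately show False using has_dist_unique[OF d1 d2] m'(1) by simp
  qed
  then show ?thesis unfolding partial_cube_def using VV_iso VV_empty by blast
qed

lemma VV_card: "card (VV k m) < 2 ^ (k+m)"
proof -
  have a: "{0} \<inter> {m..<k+m} = {}" using m1 by auto
  have "(1::nat) \<in> {0..<k+m}" using k3 by auto
  then have b: "{0} \<noteq> {0..<k+m}" by (metis singletonD zero_neq_one)
  have c: "{0} \<notin> VV k m" using a b unfolding VV_def by blast
  have d: "{0} \<in> Pow {0..<k+m}" using m1 by auto
  have "VV k m \<noteq> Pow {0..<k+m}" using c d by metis
  then have "VV k m \<subset> Pow {0..<k+m}" using VV_sub by (simp add: psubset_eq)
  then have "card (VV k m) < card (Pow {0..<k+m})" by (rule psubset_card_mono[rotated]) simp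
  then show ?thesis by (simp add: card_Pow)
qed

lemma VV_contract_iso: "iso_to_cube (contract_seq [k+m-1] (pc_graph (VV k m))) (k+m-1)"
proof -
  define f where "f = k+m-1"
  define N' where "N' = {0..<k+m-1}"
  define A' where "A' = {m..<k+m-1}"
  have mA': "m \<in> A'" "Suc m \<in> A'" using k3 unfolding A'_def by auto
  have memA: "x \<in> VV k m" if "x \<subseteq> N'" "x \<inter> A' \<noteq> {}" for x
  proof -
    have sub: "A' \<subseteq> {m..<k+m}" unfolding A'_def by auto
    have "x \<subseteq> {0..<k+m}" using that(1) unfolding N'_def by auto
    moreover have "x \<inter> {m..<k+m} \<noteq> {}" using that(2) sub by blast
    moreover have "k+m-1 \<in> {m..<k+m}" "k+m-1 \<notin> x" using that(1) k3 unfolding N'_def by auto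
    ultimately show ?thesis unfolding VV_def by blast
  qed
  have memB: "insert f x \<in> VV k m" if xN: "x \<subseteq> N'" and nA: "\<not> A' \<subseteq> x" for x
  proof -
    obtain a where a: "a \<in> A'" "a \<notin> x" using nA by blast
    have "insert f x \<subseteq> {0..<k+m}" using xN k3 unfolding N'_def f_def by auto
    moreover have "f \<in> {m..<k+m}" using k3 unfolding f_def by auto
    moreover have "a \<in> {m..<k+m}" "a \<notin> insert f x" using a unfolding A'_def f_def by auto
    ultimately show ?thesis unfolding VV_def by blast
  qed
  have fN: "f \<notin> N'" unfolding f_def N'_def by auto
  have img: "(\<lambda>v. v - {f}) ` VV k m = Pow N'"
  proof
    show "(\<lambda>v. v - {f}) ` VV k m \<subseteq> Pow N'"
    proof
      fix y assume "y \<in> (\<lambda>v. v - {f}) ` VV k m"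
      then obtain v where v: "v \<in> VV k m" "y = v - {f}" by blast
      have "v \<subseteq> {0..<k+m}" using v VV_sub by blast
      then show "y \<in> Pow N'" using v(2) unfolding N'_def f_def by auto
    qed
  next
    show "Pow N' \<subseteq> (\<lambda>v. v - {f}) ` VV k m"
    proof
      fix x assume x: "x \<in> Pow N'"
      show "x \<in> (\<lambda>v. v - {f}) ` VV k m"
      proof (cases "A' \<subseteq> x")
        case True
        then have "x \<in> VV k m" using memA x mA' by blast
        moreover have "x = x - {f}" using x fN by auto
        ultimately show ?thesis by blast
      next
        case False
        then have "insert f x \<in> VV k m" using memB x by blast
        moreover have "x = insert f x - {f}" using x fN by auto
        ultimately show ?thesis by blast
      qed
    qed
  qed
  have edge: "(x \<noteq> y \<and> (\<exists>u\<in>VV k m. \<exists>v\<in>VV k m. qedge (VV k m) u v \<and> u - {f} = x \<and> v - {f} = y))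
      \<longleftrightarrow> qadj x y" if x: "x \<subseteq> N'" and y: "y \<subseteq> N'" for x y
    by (rule edge_gen[OF mA' fN memA memB x y])
  have "contract_seq [k+m-1] (pc_graph (VV k m)) = contract f (VV k m, qedge (VV k m))"
    by (simp add: contract_seq_def pc_graph_def f_def)
  then have G: "contract_seq [k+m-1] (pc_graph (VV k m)) = (Pow N',
      \<lambda>x y. x \<noteq> y \<and> (\<exists>u\<in>VV k m. \<exists>v\<in>VV k m. qedge (VV k m) u v \<and> u - {f} = x \<and> v - {f} = y))"
    by (simp add: contract_def img)
  have "bij_betw id (Pow N') (Pow {0..<k+m-1})" unfolding N'_def by simp
  moreover have "\<forall>x\<in>Pow N'. \<forall>y\<in>Pow N'.
     (x \<noteq> y \<and> (\<exists>u\<in>VV k m. \<exists>v\<in>VV k m. qedge (VV k m) u v \<and> u - {f} = x \<and> v - {f} = y))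
      \<longleftrightarrow> qadj (id x) (id y)"
    using edge by simp
  ultimately show ?thesis unfolding iso_to_cube_def G fst_conv snd_conv by blast
qed

end



lemma contract_seq_card:
  "finite (fst G) \<Longrightarrow> finite (fst (contract_seq fs G)) \<and> card (fst (contract_seq fs G)) \<le> card (fst G)"
proof (induction fs arbitrary: G)
  case Nil then show ?case by (simp add: contract_seq_def)
next
  case (Cons f fs)
  have eq: "contract_seq (f # fs) G = contract_seq fs (contract f G)" by (simp add: contract_seq_def)
  have fc: "fst (contract f G) = (\<lambda>v. v - {f}) ` fst G" by (simp add: contract_def)
  have "finite (fst (contract f G))" using Cons.prems fc by simp
  moreover have "card (fst (contract f G)) \<le> card (fst G)" using fc card_image_le Cons.prems by simp
  ultimately show ?case using Cons.IH[of "contract f G"] eq by auto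
qed

lemma flip_inj: "inj_on (flip v) S"
proof
  fix i j assume "flip v i = flip v j"
  then have "{i} = {j}" by (metis sd_flip)
  then show "i = j" by simp
qed

lemma deg_lower:
  assumes "finite V" "v \<in> V" "\<forall>i\<in>S. flip v i \<in> V"
  shows "card S \<le> card {u \<in> V. qedge V v u}"
proof -
  have "flip v ` S \<subseteq> {u \<in> V. qedge V v u}"
    using assms hamming_flip unfolding qedge_def qadj_def by auto
  then have "card (flip v ` S) \<le> card {u \<in> V. qedge V v u}"
    by (rule card_mono[rotated]) (use assms(1) in simp)
  then show ?thesis using card_image[OF flip_inj] by simp
qed

context
  fixes k m :: nat
  assumes k3: "3 \<le> k" and m1: "1 \<le> m"
begin

lemma VV_rank: "pc_rank (k+m) (VV k m) = k+m-1"
  unfolding pc_rank_def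
proof (rule Greatest_equality)
  show "\<exists>fs. set fs \<subseteq> {0..<k+m} \<and> iso_to_cube (contract_seq fs (pc_graph (VV k m))) (k+m-1)"
    using VV_contract_iso[OF k3 m1] k3 by (intro exI[of _ "[k+m-1]"]) auto
next
  fix r assume "\<exists>fs. set fs \<subseteq> {0..<k+m} \<and> iso_to_cube (contract_seq fs (pc_graph (VV k m))) r"
  then obtain fs \<phi> where b: "bij_betw \<phi> (fst (contract_seq fs (pc_graph (VV k m)))) (Pow {0..<r})"
    unfolding iso_to_cube_def by blast
  have "card (fst (contract_seq fs (pc_graph (VV k m)))) = 2 ^ r"
    using bij_betw_same_card[OF b] by (simp add: card_Pow)
  moreover have "card (fst (contract_seq fs (pc_graph (VV k m)))) \<le> card (VV k m)"
    using contract_seq_card[of "pc_graph (VV k m)" fs] VV_fin[OF k3 m1] by (simp add: pc_graph_def)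
  moreover have "card (VV k m) < 2 ^ (k+m)" using VV_card[OF k3 m1] .
  ultimately have "(2::nat) ^ r < 2 ^ (k+m)" by linarith
  then have "r < k + m" by simp
  then show "r \<le> k + m - 1" by simp
qed

lemma memV: "x \<in> VV k m \<longleftrightarrow> x \<subseteq> {0..<k+m} \<and> (x = {} \<or> x = {0..<k+m} \<or> (x \<inter> {m..<k+m} \<noteq> {} \<and> \<not> {m..<k+m} \<subseteq> x))"
  by (simp add: VV_def)

lemma deg_M:
  assumes v: "v \<subseteq> {0..<k+m}" "v \<inter> {m..<k+m} \<noteq> {}" "\<not> {m..<k+m} \<subseteq> v"
  shows "\<exists>j. \<forall>i\<in>{0..<k+m}-{j}. flip v i \<in> VV k m"
proof -
  define N where "N = {0..<k+m}"
  define A where "A = {m..<k+m}"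
  have nA2: "\<And>i j. \<not> A \<subseteq> {i, j}" using notA2[OF k3 m1] unfolding A_def by blast
  have good: "x \<in> VV k m" if "x \<subseteq> N" "x \<inter> A \<noteq> {}" "\<not> A \<subseteq> x" for x
    using that memV unfolding N_def A_def by blast
  have vN: "v \<subseteq> N" and vA: "v \<inter> A \<noteq> {}" and nAv: "\<not> A \<subseteq> v" using v unfolding N_def A_def by auto
  have key: "\<exists>j. \<forall>i\<in>N-{j}. (i \<in> v \<longrightarrow> (v - {i}) \<inter> A \<noteq> {}) \<and> (i \<notin> v \<longrightarrow> \<not> A \<subseteq> insert i v)"
  proof (cases "\<exists>j. v \<inter> A = {j}")
    case True
    then obtain j where j: "v \<inter> A = {j}" by blast
    have "(i \<in> v \<longrightarrow> (v - {i}) \<inter> A \<noteq> {}) \<and> (i \<notin> v \<longrightarrow> \<not> A \<subseteq> insert i v)" if "i \<noteq> j" for i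
    proof
      show "i \<in> v \<longrightarrow> (v - {i}) \<inter> A \<noteq> {}" using j that by blast
      show "i \<notin> v \<longrightarrow> \<not> A \<subseteq> insert i v"
      proof
        assume "i \<notin> v"
        show "\<not> A \<subseteq> insert i v"
        proof
          assume "A \<subseteq> insert i v"
          then have "A \<subseteq> {i, j}" using j by blast
          then show False using nA2 by blast
        qed
      qed
    qed
    then show ?thesis by blast
  next
    case F1: False
    have rem: "(v - {i}) \<inter> A \<noteq> {}" for i
    proof
      assume "(v - {i}) \<inter> A = {}"
      then have "v \<inter> A \<subseteq> {i}" by blast
      then have "v \<inter> A = {i}" using vA by blast
      then show False using F1 by blast
    qed
    show ?thesis
    proof (cases "\<exists>j. A - v = {j}")
      case True
      then obtain j where j: "A - v = {j}" by blast
      have "\<not> A \<subseteq> insert i v" if "i \<noteq> j" for i using j that by blast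
      then show ?thesis using rem by blast
    next
      case False
      have "\<not> A \<subseteq> insert i v" if "i \<notin> v" for i
      proof
        assume "A \<subseteq> insert i v"
        then have "A - v \<subseteq> {i}" by blast
        moreover have "A - v \<noteq> {}" using nAv by blast
        ultimately have "A - v = {i}" by blast
        then show False using False by blast
      qed
      then show ?thesis using rem by blast
    qed
  qed
  then obtain j where j: "\<forall>i\<in>N-{j}. (i \<in> v \<longrightarrow> (v - {i}) \<inter> A \<noteq> {}) \<and> (i \<notin> v \<longrightarrow> \<not> A \<subseteq> insert i v)"
    by blast
  have "flip v i \<in> VV k m" if i: "i \<in> N - {j}" for i
  proof (cases "i \<in> v")
    case True
    have "flip v i = v - {i}" using True by (simp add: flip_def)
    moreover have "v - {i} \<subseteq> N" using vN by blast
    moreover have "(v - {i}) \<inter> A \<noteq> {}" using j i True by blast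
    moreover have "\<not> A \<subseteq> v - {i}" using nAv by blast
    ultimately show ?thesis using good by simp
  next
    case False
    have "flip v i = insert i v" using False by (simp add: flip_def)
    moreover have "insert i v \<subseteq> N" using vN i by blast
    moreover have "insert i v \<inter> A \<noteq> {}" using vA by blast
    moreover have "\<not> A \<subseteq> insert i v" using j i False by blast
    ultimately show ?thesis using good by simp
  qed
  then show ?thesis unfolding N_def by blast
qed

lemma VV_mindeg: "min_degree (pc_graph (VV k m)) = k"
proof -
  define N where "N = {0..<k+m}"
  define A where "A = {m..<k+m}"
  define V where "V = VV k m"
  define deg where "deg v = card {u \<in> V. qedge V v u}" for v
  have mem: "\<And>x. x \<in> V \<longleftrightarrow> x \<subseteq> N \<and> (x = {} \<or> x = N \<or> (x \<inter> A \<noteq> {} \<and> \<not> A \<subseteq> x))"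
    using memV unfolding N_def A_def V_def by blast
  have nA1: "\<And>i. \<not> A \<subseteq> {i}" using notA1[OF k3 m1] unfolding A_def by blast
  have AN: "A \<subseteq> N" unfolding A_def N_def by auto
  have cA: "card A = k" unfolding A_def by simp
  have finV: "finite V" using VV_fin[OF k3 m1] unfolding V_def .
  have mN: "m \<in> N" "Suc m \<in> N" using k3 unfolding N_def by auto
  have sing: "{i} \<in> V" if "i \<in> A" for i
  proof -
    have "{i} \<subseteq> N" "{i} \<inter> A \<noteq> {}" "\<not> A \<subseteq> {i}" using that AN nA1 by auto
    then show ?thesis using mem[of "{i}"] by blast
  qed
  have eV: "{} \<in> V" using mem[of "{}"] by simp
  have low_e: "k \<le> deg {}"
  proof -
    have "\<forall>i\<in>A. flip {} i \<in> V" using sing by (simp add: flip_def)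
    then have "card A \<le> deg {}" unfolding deg_def by (rule deg_lower[OF finV eV])
    then show ?thesis using cA by simp
  qed
  have up_e: "deg {} \<le> k"
  proof -
    have "{u \<in> V. qedge V {} u} \<subseteq> (\<lambda>i. {i}) ` A"
    proof
      fix u assume u: "u \<in> {u \<in> V. qedge V {} u}"
      then have "card u = 1" unfolding qedge_def qadj_def hamming_def by simp
      then obtain i where i: "u = {i}" by (auto simp: card_1_singleton_iff)
      have "u \<in> V" using u by blast
      then have "{i} \<subseteq> N" "{i} = N \<or> {i} \<inter> A \<noteq> {}" using mem[of u] i by auto
      moreover have "{i} \<noteq> N" using mN by auto
      ultimately have "i \<in> A" by auto
      then show "u \<in> (\<lambda>i. {i}) ` A" using i by blast
    qed
    then have "deg {} \<le> card ((\<lambda>i. {i}) ` A)" unfolding deg_def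
      by (rule card_mono[rotated]) (simp add: A_def)
    also have "\<dots> \<le> card A" by (rule card_image_le) (simp add: A_def)
    finally show ?thesis using cA by simp
  qed
  have low: "k \<le> deg v" if v: "v \<in> V" for v
  proof -
    consider "v = {}" | "v = N" | "v \<subseteq> N" "v \<inter> A \<noteq> {}" "\<not> A \<subseteq> v" using v mem[of v] by blast
    then show ?thesis
    proof cases
      case 1 then show ?thesis using low_e by simp
    next
      case 2
      have "flip N i \<in> V" if i: "i \<in> A" for i
      proof -
        have "i \<in> N" using i AN by blast
        then have "flip N i = N - {i}" by (simp add: flip_def)
        moreover have "N - {i} \<subseteq> N" by blast
        moreover have "(N - {i}) \<inter> A \<noteq> {}" using nA1 AN by blast
        moreover have "\<not> A \<subseteq> N - {i}" using i by blast
        moreover have "N - {i} \<in> V" using mem[of "N - {i}"] calculation(2-4) by blast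
        ultimately show ?thesis by simp
      qed
      then have "card A \<le> deg v" unfolding deg_def using deg_lower[OF finV v] 2 by blast
      then show ?thesis using cA by simp
    next
      case 3
      obtain j where j: "\<forall>i\<in>N-{j}. flip v i \<in> V"
        using deg_M 3 unfolding N_def A_def V_def by blast
      have "card (N - {j}) \<le> deg v" unfolding deg_def using deg_lower[OF finV v] j by blast
      moreover have "card (N - {j}) \<ge> k + m - 1" unfolding N_def by (simp add: card_Diff_singleton_if)
      ultimately show ?thesis using m1 by linarith
    qed
  qed
  have "min_degree (pc_graph V) = Min (deg ` V)"
    unfolding min_degree_def pc_graph_def deg_def by simp
  also have "\<dots> = k"
  proof (rule Min_eqI)
    show "finite (deg ` V)" using finV by simp
    show "\<And>y. y \<in> deg ` V \<Longrightarrow> k \<le> y" using low by blast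
    note eV
    moreover have "deg {} = k" using low_e up_e by simp
    ultimately show "k \<in> deg ` V" by (metis image_eqI)
  qed
  finally show ?thesis unfolding V_def .
qed

lemma VV_all: "partial_cube (k+m) (VV k m) \<and> antipodal (k+m) (VV k m) \<and>
   pc_rank (k+m) (VV k m) = k+m-1 \<and> min_degree (pc_graph (VV k m)) = k"
  using VV_pc[OF k3 m1] VV_antipodal[OF k3 m1] VV_rank VV_mindeg by blast

end

theorem mainTheorem16:
  shows "(\<forall>r::nat. r \<ge> 4 \<longrightarrow> (\<exists>n V. partial_cube n V \<and> antipodal n V \<and>
            pc_rank n V = r \<and> min_degree (pc_graph V) = 4))
       \<and> (\<exists>n V. partial_cube n V \<and> antipodal n V \<and>
            pc_rank n V = 4 \<and> min_degree (pc_graph V) = 3)"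
proof
  show "\<forall>r::nat. r \<ge> 4 \<longrightarrow> (\<exists>n V. partial_cube n V \<and> antipodal n V \<and>
            pc_rank n V = r \<and> min_degree (pc_graph V) = 4)"
  proof (intro allI impI)
    fix r :: nat assume r: "r \<ge> 4"
    have H: "partial_cube (4+(r-3)) (VV 4 (r-3)) \<and> antipodal (4+(r-3)) (VV 4 (r-3)) \<and>
      pc_rank (4+(r-3)) (VV 4 (r-3)) = 4+(r-3)-1 \<and> min_degree (pc_graph (VV 4 (r-3))) = 4"
      by (rule VV_all) (use r in auto)
    have e: "4 + (r-3) - 1 = r" using r by simp
    show "\<exists>n V. partial_cube n V \<and> antipodal n V \<and> pc_rank n V = r \<and> min_degree (pc_graph V) = 4"
      apply (rule exI[of _ "4+(r-3)"])
      apply (rule exI[of _ "VV 4 (r-3)"])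
      using H unfolding e by blast
  qed
next
  have H: "partial_cube (3+2) (VV 3 2) \<and> antipodal (3+2) (VV 3 2) \<and>
      pc_rank (3+2) (VV 3 2) = 3+2-1 \<and> min_degree (pc_graph (VV 3 2)) = 3"
    by (rule VV_all) auto
  have e: "(3::nat) + 2 - 1 = 4" by simp
  show "\<exists>n V. partial_cube n V \<and> antipodal n V \<and> pc_rank n V = 4 \<and> min_degree (pc_graph V) = 3"
    apply (rule exI[of _ "3+2"])
    apply (rule exI[of _ "VV 3 2"])
    using H unfolding e by blast
qed

end
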